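(* Let $n\ge1$ and let $\lambda,\lambda_1,\dots,\lambda_{n+1}$ be real numbers with $|\lambda|<|\lambda_1|\le|\lambda_2|\le\cdots\le|\lambda_{n+1}|$. Then there exist no matrix $\mathbf U\in U(n,1)$ and complex number $c$ such that $\mathbf U\cdot\mathrm{diag}(\lambda,\lambda_2,\dots,\lambda_{n+1})\cdot\mathbf U^t=c\cdot\mathrm{diag}(\lambda_1,\lambda_2,\dots,\lambda_{n+1})$.
   Context: $U(n,1)$ denotes the group of $(n+1)\times(n+1)$ complex matrices $\mathbf U$ with $\mathbf U J\overline{\mathbf U}^t=J$, where $J=\mathrm{diag}(1,\dots,1,-1)$; $\mathbf U^t$ is the transpose. *)

theory Defs
  imports Complex_Main "Jordan_Normal_Form.Matrix"
begin

definition J_mat :: "nat \<Rightarrow> complex mat" where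
  "J_mat n = mat (n+1) (n+1) (\<lambda>(i,j). if i = j then (if i = n then -1 else 1) else 0)"

definition U_n1 :: "nat \<Rightarrow> complex mat set" where
  "U_n1 n = {U. U \<in> carrier_mat (n+1) (n+1) \<and>
                U * J_mat n * transpose_mat (map_mat cnj U) = J_mat n}"

definition diag_c :: "nat \<Rightarrow> (nat \<Rightarrow> complex) \<Rightarrow> complex mat" where
  "diag_c n d = mat (n+1) (n+1) (\<lambda>(i,j). if i = j then d i else 0)"

end

theory Submission imports Defs "Jordan_Normal_Form.Determinant" begin

lemma diag_carrier[simp]: "diag_c n d \<in> carrier_mat (n+1) (n+1)"
  by (simp add: diag_c_def)
lemma diag_dims[simp]: "dim_row (diag_c n d) = n+1" "dim_col (diag_c n d) = n+1"
  by (simp_all add: diag_c_def)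
lemma J_diag: "J_mat n = diag_c n (\<lambda>i. if i = n then -1 else 1)"
  by (rule eq_matI) (auto simp: J_mat_def diag_c_def)
lemma sum_delta_aux: "(\<Sum>l\<in>{0..<N::nat}. (if i = l then x l else 0) * y l) = (if i < N then x i * y i else (0::'a::semiring_0))"
proof -
  have "(\<lambda>l. (if i = l then x l else 0) * y l) = (\<lambda>l. if i = l then x l * y l else 0)" by auto
  then show ?thesis by (subst \<open>_ = _\<close>) (simp add: sum.delta')
qed
lemma diag_mult: "diag_c n a * diag_c n b = diag_c n (\<lambda>i. a i * b i)"
  apply (rule eq_matI) apply (auto simp: diag_c_def scalar_prod_def sum_delta_aux less_Suc_eq)
  done
lemma diag_smult: "c \<cdot>\<^sub>m diag_c n a = diag_c n (\<lambda>i. c * a i)"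
  by (rule eq_matI) (auto simp: diag_c_def)
lemma diag_minus: "diag_c n a - diag_c n b = diag_c n (\<lambda>i. a i - b i)"
  by (rule eq_matI) (auto simp: diag_c_def)
lemma diag_transpose: "transpose_mat (diag_c n a) = diag_c n a"
  by (rule eq_matI) (auto simp: diag_c_def)
lemma diag_cnj: "map_mat cnj (diag_c n a) = diag_c n (\<lambda>i. cnj (a i))"
  by (rule eq_matI) (auto simp: diag_c_def)
lemma det_diag: "det (diag_c n a) = (\<Prod>i<n+1. a i)"
proof -
  have "det (diag_c n a) = prod_list (diag_mat (diag_c n a))"
    by (rule det_upper_triangular[of _ "n+1"]) (auto simp: upper_triangular_def diag_c_def)
  also have "\<dots> = prod_list (map a [0..<n+1])"
    unfolding diag_mat_def by (rule arg_cong[where f=prod_list], rule map_cong) (auto simp: diag_c_def)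
  also have "\<dots> = (\<Prod>i<n+1. a i)"
    by (metis atLeast0LessThan distinct_upt prod.distinct_set_conv_list set_upt)
  finally show ?thesis .
qed
lemma cnj_mult: "A \<in> carrier_mat n m \<Longrightarrow> B \<in> carrier_mat m k \<Longrightarrow>
   map_mat cnj (A*B) = map_mat cnj A * map_mat cnj B"
  by (rule eq_matI) (auto simp: scalar_prod_def cnj_sum)
lemma cnj_transpose: "map_mat f (transpose_mat A) = transpose_mat (map_mat f A)"
  by (rule eq_matI) auto


lemma mono_l:
  fixes l :: "nat \<Rightarrow> real"
  assumes mono: "\<forall>i\<in>{1..n}. \<bar>l i\<bar> \<le> \<bar>l (i+1)\<bar>" and i: "1 \<le> i"
  shows "i + k \<le> n+1 \<Longrightarrow> \<bar>l i\<bar> \<le> \<bar>l (i+k)\<bar>"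
proof (induction k)
  case 0 then show ?case by simp
next
  case (Suc k)
  then have "\<bar>l i\<bar> \<le> \<bar>l (i+k)\<bar>" by simp
  moreover have "i + k \<in> {1..n}" using Suc.prems i by auto
  then have "\<bar>l (i+k)\<bar> \<le> \<bar>l (i+k+1)\<bar>" using mono by blast
  ultimately show ?case by simp
qed

lemma arith:
  fixes lam s :: real and l :: "nat \<Rightarrow> real"
  assumes n: "n \<ge> 1" and lam: "\<bar>lam\<bar> < \<bar>l 1\<bar>"
    and mono: "\<forall>i\<in>{1..n}. \<bar>l i\<bar> \<le> \<bar>l (i+1)\<bar>" and s: "s \<ge> 0"
    and eq: "\<And>t. (\<Prod>i<n+1. (if i=0 then lam else l (i+1))^2 - t) = (\<Prod>i<n+1. s * (l (i+1))^2 - t)"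
  shows False
proof -
  have bnd: "0 < (l (i+1))^2 \<and> (l (i+1))^2 \<le> (l (n+1))^2" if "i < n+1" for i
  proof -
    have a: "\<bar>l 1\<bar> \<le> \<bar>l (1+i)\<bar>" using mono_l[OF mono, of 1 i] that by simp
    have b: "\<bar>l (i+1)\<bar> \<le> \<bar>l ((i+1)+(n-i))\<bar>" using mono_l[OF mono, of "i+1" "n-i"] that by simp
    have "0 < \<bar>l (i+1)\<bar>" using a lam by simp
    moreover have "\<bar>l (i+1)\<bar> \<le> \<bar>l (n+1)\<bar>" using b that by simp
    ultimately show ?thesis
      by (metis abs_ge_zero abs_not_less_zero power2_abs power_mono zero_less_power2 abs_zero not_less)
  qed
  define Q where "Q = (\<Prod>i<n. (l (Suc i + 1))^2)"
  have Qpos: "Q > 0" unfolding Q_def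
    by (rule prod_pos) (use bnd in auto)
  note e0 = eq[of 0]
  have "(\<Prod>i<n+1. (if i=0 then lam else l (i+1))^2) = lam^2 * Q"
    unfolding Q_def by (simp add: prod.lessThan_Suc_shift del: prod.lessThan_Suc)
  moreover have "(\<Prod>i<n+1. s * (l (i+1))^2) = s^(n+1) * (l 1)^2 * Q"
    unfolding Q_def by (simp add: prod.lessThan_Suc_shift prod.distrib del: prod.lessThan_Suc)
  ultimately have "lam^2 * Q = s^(n+1) * (l 1)^2 * Q" using e0 by simp
  then have e1: "lam^2 = s^(n+1) * (l 1)^2" using Qpos by simp
  have "lam^2 < (l 1)^2" using lam
    by (metis abs_ge_zero power2_abs power_strict_mono zero_less_numeral)
  then have "s^(n+1) < 1"
  proof (rule contrapos_pp)
    assume "\<not> s^(n+1) < 1"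
    then have "1 \<le> s^(n+1)" by simp
    then have "(l 1)^2 \<le> s^(n+1) * (l 1)^2" using mult_right_mono[of 1 "s^(n+1)" "(l 1)^2"] by simp
    then show "\<not> lam^2 < (l 1)^2" using e1 by simp
  qed
  then have s1: "s < 1" using s
    by (metis not_less one_le_power)
  have z: "(\<Prod>i<n+1. (if i=0 then lam else l (i+1))^2 - (l (n+1))^2) = 0"
    by (rule prod_zero) (use n in \<open>auto intro!: bexI[of _ n]\<close>)
  moreover have nz: "(\<Prod>i<n+1. s * (l (i+1))^2 - (l (n+1))^2) \<noteq> 0"
  proof -
    have neg: "s * (l (i+1))^2 - (l (n+1))^2 < 0" if "i < n+1" for i
    proof -
      have "s * (l (i+1))^2 < 1 * (l (i+1))^2"
        using bnd[OF that] s1 by (intro mult_strict_right_mono) auto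
      then show ?thesis using bnd[OF that] by linarith
    qed
    have "\<forall>i\<in>{..<n+1}. s * (l (i+1))^2 - (l (n+1))^2 \<noteq> 0"
    proof
      fix i assume "i \<in> {..<n+1}"
      then have "i < n+1" by simp
      from neg[OF this] show "s * (l (i+1))^2 - (l (n+1))^2 \<noteq> 0" by linarith
    qed
    then show ?thesis by (subst prod_zero_iff) simp_all
  qed
  ultimately show False using eq[of "(l (n+1))^2"] by argo
qed

lemma diag_one: "diag_c n (\<lambda>_. 1) = 1\<^sub>m (n+1)"
  by (rule eq_matI) (auto simp: diag_c_def)

lemma cnj_cnj_mat: "map_mat cnj (map_mat cnj U) = U"
  by (rule eq_matI) auto

lemma cong_det:
  assumes "U \<in> carrier_mat N N" "X \<in> carrier_mat N N" "V \<in> carrier_mat N N"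
    "det U * det V = (1::complex)"
  shows "det (U * X * V) = det X"
proof -
  have "det (U * X * V) = det U * det X * det V"
    using assms by (simp add: det_mult[of _ N])
  also have "\<dots> = det X" using assms(4) by (simp add: algebra_simps)
  finally show ?thesis .
qed

lemma entry_aux: "c * of_real x * y * cnj (c * of_real x) = y * complex_of_real ((cmod c)^2 * x^2)"
proof -
  have "c * of_real x * y * cnj (c * of_real x) = y * (c * cnj c) * of_real (x^2)"
    by (simp add: power2_eq_square algebra_simps)
  also have "\<dots> = y * complex_of_real ((cmod c)^2 * x^2)"
    by (simp add: complex_norm_square[symmetric])
  finally show ?thesis .
qed

theorem mainTheorem7:
  fixes n :: nat and lam :: real and l :: "nat \<Rightarrow> real"
  assumes "n \<ge> 1"
    and "\<bar>lam\<bar> < \<bar>l 1\<bar>"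
    and "\<forall>i\<in>{1..n}. \<bar>l i\<bar> \<le> \<bar>l (i+1)\<bar>"
  shows "\<not> (\<exists>U \<in> U_n1 n. \<exists>c :: complex.
    U * diag_c n (\<lambda>i. if i = 0 then complex_of_real lam else complex_of_real (l (i+1)))
      * transpose_mat U
    = c \<cdot>\<^sub>m diag_c n (\<lambda>i. complex_of_real (l (i+1))))"
proof
  assume "\<exists>U \<in> U_n1 n. \<exists>c :: complex.
    U * diag_c n (\<lambda>i. if i = 0 then complex_of_real lam else complex_of_real (l (i+1)))
      * transpose_mat U
    = c \<cdot>\<^sub>m diag_c n (\<lambda>i. complex_of_real (l (i+1)))"
  then obtain U c where U: "U \<in> carrier_mat (n+1) (n+1)"
    and UJ: "U * J_mat n * transpose_mat (map_mat cnj U) = J_mat n"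
    and E0: "U * diag_c n (\<lambda>i. if i = 0 then complex_of_real lam else complex_of_real (l (i+1)))
      * transpose_mat U = c \<cdot>\<^sub>m diag_c n (\<lambda>i. complex_of_real (l (i+1)))"
    unfolding U_n1_def by blast
  define dl where "dl = (\<lambda>i::nat. if i = 0 then lam else l (i+1))"
  define dr where "dr = (\<lambda>i::nat. l (i+1))"
  define j where "j = (\<lambda>i::nat. if i = n then -1 else (1::complex))"
  define J where "J = diag_c n j"
  define D where "D = diag_c n (\<lambda>i. complex_of_real (dl i))"
  define D' where "D' = diag_c n (\<lambda>i. complex_of_real (dr i))"
  define Uc where "Uc = map_mat cnj U"
  define UH where "UH = transpose_mat Uc"
  have JJ: "J_mat n = J" unfolding J_def j_def by (rule J_diag)
  have E: "U * D * transpose_mat U = c \<cdot>\<^sub>m D'"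
  proof -
    have "(\<lambda>i. if i = 0 then complex_of_real lam else complex_of_real (l (i+1))) = (\<lambda>i. complex_of_real (dl i))"
      by (auto simp: dl_def)
    then show ?thesis using E0 unfolding D_def D'_def dr_def by simp
  qed
  have UH1: "U * J * UH = J" using UJ unfolding JJ UH_def Uc_def .
  have cU: "Uc \<in> carrier_mat (n+1) (n+1)" "UH \<in> carrier_mat (n+1) (n+1)"
     "transpose_mat U \<in> carrier_mat (n+1) (n+1)"
    using U by (auto simp: Uc_def UH_def)
  have cJ: "J \<in> carrier_mat (n+1) (n+1)" "D \<in> carrier_mat (n+1) (n+1)" "D' \<in> carrier_mat (n+1) (n+1)"
    by (auto simp: J_def D_def D'_def)
  have JJ1: "J * J = 1\<^sub>m (n+1)"
    unfolding J_def diag_mult diag_one[symmetric] by (rule arg_cong[where f="diag_c n"]) (auto simp: j_def)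
  have inv1: "U * (J * UH * J) = 1\<^sub>m (n+1)"
  proof -
    have "U * (J * UH * J) = (U * J * UH) * J" using U cU cJ by (simp add: assoc_mult_mat[of _ "n+1" "n+1" _ "n+1" _ "n+1"])
    then show ?thesis using UH1 JJ1 by simp
  qed
  have inv2: "(J * UH * J) * U = 1\<^sub>m (n+1)"
    by (rule mat_mult_left_right_inverse[OF U _ inv1]) (use cU cJ in simp)
  have UHJU: "UH * J * U = J"
  proof -
    have "J * ((J * UH * J) * U) = J" using inv2 cJ by simp
    moreover have "J * ((J * UH * J) * U) = (J * J) * (UH * J * U)" using U cU cJ by (simp add: assoc_mult_mat[of _ "n+1" "n+1" _ "n+1" _ "n+1"])
    ultimately show ?thesis using JJ1 U cU cJ by simp
  qed
  have cnjJ: "map_mat cnj J = J" unfolding J_def diag_cnj by (rule arg_cong[where f="diag_c n"]) (auto simp: j_def)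
  have cnjD: "map_mat cnj D = D" unfolding D_def diag_cnj by simp
  have KEY1: "transpose_mat U * J * Uc = J"
  proof -
    have "map_mat cnj (UH * J * U) = map_mat cnj UH * map_mat cnj J * map_mat cnj U"
      using U cU cJ by (simp add: cnj_mult[of _ "n+1" "n+1" _ "n+1"])
    also have "\<dots> = transpose_mat U * J * Uc"
      unfolding cnjJ UH_def cnj_transpose Uc_def cnj_cnj_mat ..
    finally show ?thesis using UHJU cnjJ by simp
  qed
  have detJ: "det J = -1"
  proof -
    have "(\<Prod>i<n. j i) = 1" by (rule prod.neutral) (auto simp: j_def)
    then show ?thesis unfolding J_def det_diag by (simp add: j_def)
  qed
  have detU: "det U * det UH = 1"
  proof -
    have "det (U * J * UH) = det U * det J * det UH"
      using U cU cJ by (simp add: det_mult[of _ "n+1"])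
    then have "det U * det J * det UH = det J" using UH1 by simp
    then show ?thesis using detJ by (simp add: algebra_simps)
  qed
  define M where "M = U * D * transpose_mat U"
  have MH: "transpose_mat (map_mat cnj M) = Uc * D * UH"
  proof -
    have "map_mat cnj M = Uc * D * transpose_mat Uc"
      unfolding M_def using U cU cJ
      by (simp add: cnj_mult[of _ "n+1" "n+1" _ "n+1"] cnjD cnj_transpose Uc_def)
    then have "transpose_mat (map_mat cnj M) = transpose_mat (Uc * D * transpose_mat Uc)" by simp
    also have "\<dots> = transpose_mat (transpose_mat Uc) * transpose_mat (Uc * D)"
      by (rule transpose_mult[of _ "n+1" "n+1"]) (use cU cJ in auto)
    also have "\<dots> = Uc * (transpose_mat D * transpose_mat Uc)"
      using transpose_mult[of Uc "n+1" "n+1" D "n+1"] cU cJ by simp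
    also have "\<dots> = Uc * D * UH"
      using cU cJ by (simp add: UH_def D_def diag_transpose assoc_mult_mat[of _ "n+1" "n+1" _ "n+1" _ "n+1"])
    finally show ?thesis .
  qed
  have P1: "M * J * transpose_mat (map_mat cnj M) = U * (D * J * D) * UH"
  proof -
    have "M * J * transpose_mat (map_mat cnj M) = U * D * transpose_mat U * J * (Uc * D * UH)"
      by (subst MH) (simp only: M_def)
    also have "\<dots> = U * (D * (transpose_mat U * J * Uc) * D) * UH"
      using U cU cJ by (simp add: assoc_mult_mat[of _ "n+1" "n+1" _ "n+1" _ "n+1"])
    also have "\<dots> = U * (D * J * D) * UH" unfolding KEY1 ..
    finally show ?thesis .
  qed
  define R where "R = (\<lambda>i. j i * complex_of_real ((cmod c)^2 * (dr i)^2))"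
  have P2: "M * J * transpose_mat (map_mat cnj M) = diag_c n R"
  proof -
    have "M * J * transpose_mat (map_mat cnj M) = (c \<cdot>\<^sub>m D') * J * transpose_mat (map_mat cnj (c \<cdot>\<^sub>m D'))"
      unfolding M_def E ..
    also have "\<dots> = diag_c n (\<lambda>i. c * of_real (dr i) * j i * cnj (c * of_real (dr i)))"
      unfolding D'_def J_def diag_smult diag_cnj diag_transpose diag_mult ..
    also have "\<dots> = diag_c n R" unfolding R_def entry_aux ..
    finally show ?thesis .
  qed
  have DJD: "D * J * D = diag_c n (\<lambda>i. j i * of_real ((dl i)^2))"
    unfolding D_def J_def diag_mult by (rule arg_cong[where f="diag_c n"]) (auto simp: power2_eq_square)
  have deteq: "(\<Prod>i<n+1. j i * of_real ((dl i)^2 - t)) = (\<Prod>i<n+1. j i * of_real ((cmod c)^2 * (dr i)^2 - t))"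
    for t :: real
  proof -
    have cX: "D * J * D \<in> carrier_mat (n+1) (n+1)" using cJ by simp
    have ctJ: "of_real t \<cdot>\<^sub>m J \<in> carrier_mat (n+1) (n+1)" using cJ by simp
    have sm: "U * (of_real t \<cdot>\<^sub>m J) * UH = of_real t \<cdot>\<^sub>m (U * J * UH)"
      using U cJ cU by (simp add: mult_smult_distrib[OF U cJ(1)] mult_smult_assoc_mat[of _ "n+1" "n+1"])
    have "U * (D * J * D - of_real t \<cdot>\<^sub>m J) * UH = (U * (D * J * D) - U * (of_real t \<cdot>\<^sub>m J)) * UH"
      by (subst mult_minus_distrib_mat[OF U cX ctJ]) rule
    also have "\<dots> = U * (D * J * D) * UH - U * (of_real t \<cdot>\<^sub>m J) * UH"
      by (rule minus_mult_distrib_mat[where nr="n+1" and n="n+1", OF _ _ cU(2)]) (use U cX ctJ in simp_all)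
    also have "\<dots> = U * (D * J * D) * UH - of_real t \<cdot>\<^sub>m (U * J * UH)"
      using sm by simp
    also have "\<dots> = diag_c n R - of_real t \<cdot>\<^sub>m J" using P1 P2 UH1 by simp
    finally have X: "U * (D * J * D - of_real t \<cdot>\<^sub>m J) * UH = diag_c n R - of_real t \<cdot>\<^sub>m J" .
    have "det (D * J * D - of_real t \<cdot>\<^sub>m J) = det (diag_c n R - of_real t \<cdot>\<^sub>m J)"
      unfolding X[symmetric] by (rule cong_det[symmetric, OF U _ cU(2) detU]) (use cX ctJ in \<open>simp add: minus_carrier_mat\<close>)
    moreover have "D * J * D - of_real t \<cdot>\<^sub>m J = diag_c n (\<lambda>i. j i * of_real ((dl i)^2 - t))"
      unfolding DJD unfolding J_def diag_smult diag_minus by (rule arg_cong[where f="diag_c n"]) (auto simp: algebra_simps)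
    moreover have "diag_c n R - of_real t \<cdot>\<^sub>m J = diag_c n (\<lambda>i. j i * of_real ((cmod c)^2 * (dr i)^2 - t))"
      unfolding R_def J_def diag_smult diag_minus by (rule arg_cong[where f="diag_c n"]) (auto simp: algebra_simps)
    ultimately show ?thesis by (simp add: det_diag)
  qed
  have jnz: "(\<Prod>i<n+1. j i) \<noteq> 0" by (simp add: j_def)
  have req: "(\<Prod>i<n+1. (dl i)^2 - t) = (\<Prod>i<n+1. (cmod c)^2 * (dr i)^2 - t)" for t :: real
  proof -
    have "(\<Prod>i<n+1. j i) * (\<Prod>i<n+1. complex_of_real ((dl i)^2 - t)) = (\<Prod>i<n+1. j i) * (\<Prod>i<n+1. complex_of_real ((cmod c)^2 * (dr i)^2 - t))"
      using deteq[of t] by (simp only: prod.distrib)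
    then have "(\<Prod>i<n+1. complex_of_real ((dl i)^2 - t)) = (\<Prod>i<n+1. complex_of_real ((cmod c)^2 * (dr i)^2 - t))"
      using jnz mult_left_cancel by blast
    then have "complex_of_real (\<Prod>i<n+1. (dl i)^2 - t) = complex_of_real (\<Prod>i<n+1. (cmod c)^2 * (dr i)^2 - t)"
      by (simp only: of_real_prod)
    then show ?thesis by (simp only: of_real_eq_iff)
  qed
  show False
    by (rule arith[OF assms(1,2,3), of "(cmod c)^2"]) (use req in \<open>auto simp: dl_def dr_def\<close>)
qed
end
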